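(* Let $(u,\phi)$ be a smooth solution of the periodic problem (PF-NS). Then for all $t>0$, $$\frac{d}{dt}\Big(\frac12\|u(t)\|^2+E(\phi(t))\Big)+\mu\|\nabla u\|^2+\gamma\Big\|\frac{\delta E}{\delta\phi}\Big\|^2=0.$$
   Context: Setting. $Q$ is the unit cube in $\mathbb R^3$ and all functions are $Q$-periodic; $\|\cdot\|$ is the $L^2(Q)$ norm. Fixed positive constants: $k,\varepsilon,\gamma,\mu,M_1,M_2$. For a scalar $\phi$: $f(\phi)=-\varepsilon\Delta\phi+\frac1\varepsilon(\phi^2-1)\phi$, $g(\phi)=-\Delta f(\phi)+\frac1{\varepsilon^2}(3\phi^2-1)f(\phi)$, $A(\phi)=\int_Q\phi$, $B(\phi)=\int_Q(\frac\varepsilon2|\nabla\phi|^2+\frac1{4\varepsilon}(\phi^2-1)^2)$, $E(\phi)=\frac{k}{2\varepsilon}\int_Q|f(\phi)|^2+\frac12M_1(A(\phi)-\alpha)^2+\frac12M_2(B(\phi)-\beta)^2$ with $\alpha=A(\phi_0)$, $\beta=B(\phi_0)$, and $\frac{\delta E}{\delta\phi}=kg(\phi)+M_1(A(\phi)-\alpha)+M_2(B(\phi)-\beta)f(\phi)$. Problem (PF-NS): $u_t+u\cdot\nabla u+\nabla P=\mu\Delta u+\frac{\delta E}{\delta\phi}\nabla\phi$, $\nabla\cdot u=0$, $\phi_t+u\cdot\nabla\phi=-\gamma\frac{\delta E}{\delta\phi}$, periodic in $x$, $u(0)=u_0$ (divergence free, zero mean), $\phi(0)=\phi_0$. *)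

theory Defs
  imports "HOL-Analysis.Analysis"
begin

type_synonym sp = "real ^ 3"

definition Qcube :: "sp set" where
  "Qcube = cbox 0 One"

text \<open>C-infinity on an open set S: there is a family of functions containing f,
  closed under taking directional (Frechet) derivatives, all of whose members are
  continuous on S and differentiable at every point of S.\<close>
definition smooth_on :: "'a::real_normed_vector set \<Rightarrow> ('a \<Rightarrow> 'b::real_normed_vector) \<Rightarrow> bool" where
  "smooth_on S f \<longleftrightarrow> (\<exists>F. f \<in> F \<and>
     (\<forall>g\<in>F. continuous_on S g \<and> (\<forall>x\<in>S. g differentiable (at x)) \<and>
              (\<forall>v. (\<lambda>x. frechet_derivative g (at x) v) \<in> F)))"

definition periodic :: "(sp \<Rightarrow> 'b) \<Rightarrow> bool" where
  "periodic h \<longleftrightarrow> (\<forall>x i. h (x + axis i 1) = h x)"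

definition pd :: "3 \<Rightarrow> (sp \<Rightarrow> real) \<Rightarrow> sp \<Rightarrow> real" where
  "pd i h x = frechet_derivative h (at x) (axis i 1)"

definition grad :: "(sp \<Rightarrow> real) \<Rightarrow> sp \<Rightarrow> real ^ 3" where
  "grad h x = (\<chi> i. pd i h x)"

definition lapl :: "(sp \<Rightarrow> real) \<Rightarrow> sp \<Rightarrow> real" where
  "lapl h x = (\<Sum>i\<in>UNIV. pd i (pd i h) x)"

definition vlapl :: "(sp \<Rightarrow> real ^ 3) \<Rightarrow> sp \<Rightarrow> real ^ 3" where
  "vlapl v x = (\<chi> j. lapl (\<lambda>y. v y $ j) x)"

definition divg :: "(sp \<Rightarrow> real ^ 3) \<Rightarrow> sp \<Rightarrow> real" where
  "divg v x = (\<Sum>i\<in>UNIV. pd i (\<lambda>y. v y $ i) x)"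

definition advect :: "(sp \<Rightarrow> real ^ 3) \<Rightarrow> (sp \<Rightarrow> real ^ 3) \<Rightarrow> sp \<Rightarrow> real ^ 3" where
  "advect v w x = (\<chi> j. \<Sum>i\<in>UNIV. v x $ i * pd i (\<lambda>y. w y $ j) x)"

definition L2sq :: "(sp \<Rightarrow> real) \<Rightarrow> real" where
  "L2sq h = integral Qcube (\<lambda>x. (h x)\<^sup>2)"

definition L2sqv :: "(sp \<Rightarrow> real ^ 3) \<Rightarrow> real" where
  "L2sqv v = integral Qcube (\<lambda>x. (norm (v x))\<^sup>2)"

definition gradL2sqv :: "(sp \<Rightarrow> real ^ 3) \<Rightarrow> real" where
  "gradL2sqv v = integral Qcube (\<lambda>x. \<Sum>j\<in>UNIV. (norm (grad (\<lambda>y. v y $ j) x))\<^sup>2)"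

definition fop :: "real \<Rightarrow> (sp \<Rightarrow> real) \<Rightarrow> sp \<Rightarrow> real" where
  "fop \<epsilon> \<phi> x = - \<epsilon> * lapl \<phi> x + (1/\<epsilon>) * ((\<phi> x)\<^sup>2 - 1) * \<phi> x"

definition gop :: "real \<Rightarrow> (sp \<Rightarrow> real) \<Rightarrow> sp \<Rightarrow> real" where
  "gop \<epsilon> \<phi> x = - lapl (fop \<epsilon> \<phi>) x + (1/\<epsilon>\<^sup>2) * (3 * (\<phi> x)\<^sup>2 - 1) * fop \<epsilon> \<phi> x"

definition Aop :: "(sp \<Rightarrow> real) \<Rightarrow> real" where
  "Aop \<phi> = integral Qcube \<phi>"

definition Bop :: "real \<Rightarrow> (sp \<Rightarrow> real) \<Rightarrow> real" where
  "Bop \<epsilon> \<phi> = integral Qcube (\<lambda>x. \<epsilon>/2 * (norm (grad \<phi> x))\<^sup>2 + 1/(4*\<epsilon>) * ((\<phi> x)\<^sup>2 - 1)\<^sup>2)"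

definition Eop :: "real \<Rightarrow> real \<Rightarrow> real \<Rightarrow> real \<Rightarrow> real \<Rightarrow> real \<Rightarrow> (sp \<Rightarrow> real) \<Rightarrow> real" where
  "Eop k \<epsilon> M1 M2 \<alpha> \<beta> \<phi> =
     k/(2*\<epsilon>) * integral Qcube (\<lambda>x. (fop \<epsilon> \<phi> x)\<^sup>2)
     + 1/2 * M1 * (Aop \<phi> - \<alpha>)\<^sup>2 + 1/2 * M2 * (Bop \<epsilon> \<phi> - \<beta>)\<^sup>2"

definition dEop :: "real \<Rightarrow> real \<Rightarrow> real \<Rightarrow> real \<Rightarrow> real \<Rightarrow> real \<Rightarrow> (sp \<Rightarrow> real) \<Rightarrow> sp \<Rightarrow> real" where
  "dEop k \<epsilon> M1 M2 \<alpha> \<beta> \<phi> x =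
     k * gop \<epsilon> \<phi> x + M1 * (Aop \<phi> - \<alpha>) + M2 * (Bop \<epsilon> \<phi> - \<beta>) * fop \<epsilon> \<phi> x"

end

theory Submission
  imports Defs
begin
definition SS :: "(real \<times> sp) set" where "SS = {0<..} \<times> UNIV"

lemma open_SS: "open SS" unfolding SS_def by (intro open_Times open_greaterThan open_UNIV)

definition Dv :: "(real \<times> sp) \<Rightarrow> (real \<times> sp \<Rightarrow> real) \<Rightarrow> real \<times> sp \<Rightarrow> real" where
  "Dv v g p = frechet_derivative g (at p) v"

inductive_set Alg :: "(real \<times> sp \<Rightarrow> real) set \<Rightarrow> (real \<times> sp \<Rightarrow> real) set" for A where
  base: "g \<in> A \<Longrightarrow> g \<in> Alg A"
| const: "(\<lambda>p. c) \<in> Alg A"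
| add: "g \<in> Alg A \<Longrightarrow> h \<in> Alg A \<Longrightarrow> (\<lambda>p. g p + h p) \<in> Alg A"
| mult: "g \<in> Alg A \<Longrightarrow> h \<in> Alg A \<Longrightarrow> (\<lambda>p. g p * h p) \<in> Alg A"
| agree: "g \<in> Alg A \<Longrightarrow> (\<forall>p\<in>SS. h p = g p) \<Longrightarrow> h \<in> Alg A"

definition good :: "(real \<times> sp \<Rightarrow> real) set \<Rightarrow> bool" where
  "good A \<longleftrightarrow> (\<forall>g\<in>A. (\<forall>p\<in>SS. g differentiable (at p)) \<and> (\<forall>v. Dv v g \<in> Alg A))"

lemma Dv_at: "(f has_derivative f') (at p) \<Longrightarrow> Dv v f p = f' v"
  unfolding Dv_def using frechet_derivative_at by metis

lemma fd_agree:
  assumes "\<forall>p\<in>SS. h p = g p" "p \<in> SS"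
  shows "frechet_derivative h (at p) = frechet_derivative g (at p)"
proof -
  have "\<And>D. (h has_derivative D) (at p) \<longleftrightarrow> (g has_derivative D) (at p)"
    using has_derivative_transform_within_open[OF _ open_SS assms(2)] assms(1) by metis
  then show ?thesis unfolding frechet_derivative_def by simp
qed

lemma Dv_agree: "\<forall>p\<in>SS. h p = g p \<Longrightarrow> p \<in> SS \<Longrightarrow> Dv v h p = Dv v g p"
  unfolding Dv_def using fd_agree by metis

lemma alg_main:
  assumes gd: "good A" and g: "g \<in> Alg A"
  shows "(\<forall>p\<in>SS. g differentiable (at p)) \<and> (\<forall>v. Dv v g \<in> Alg A)"
  using g
proof induction
  case (base g) then show ?case using gd unfolding good_def by blast
next
  case (const c)
  have "Dv v (\<lambda>p. c) = (\<lambda>p. 0)" for v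
    unfolding Dv_def by (rule ext) (metis frechet_derivative_at has_derivative_const)
  then show ?case using Alg.const by auto
next
  case (add g h)
  have d: "\<forall>p\<in>SS. (\<lambda>p. g p + h p) differentiable (at p)" using add by auto
  have "Dv v (\<lambda>p. g p + h p) \<in> Alg A" for v
  proof (rule Alg.agree[OF Alg.add[of "Dv v g" A "Dv v h"]])
    show "Dv v g \<in> Alg A" "Dv v h \<in> Alg A" using add.IH by (metis surjective_pairing)+
    show "\<forall>p\<in>SS. Dv v (\<lambda>p. g p + h p) p = Dv v g p + Dv v h p"
    proof
      fix p assume p: "p \<in> SS"
      have "((\<lambda>p. g p + h p) has_derivative (\<lambda>v. frechet_derivative g (at p) v + frechet_derivative h (at p) v)) (at p)"
        using add p by (intro has_derivative_add) (auto simp: frechet_derivative_works)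
      then have "frechet_derivative (\<lambda>p. g p + h p) (at p) = (\<lambda>v. frechet_derivative g (at p) v + frechet_derivative h (at p) v)"
        by (rule frechet_derivative_at[symmetric])
      then show "Dv v (\<lambda>p. g p + h p) p = Dv v g p + Dv v h p"
        unfolding Dv_def by simp
    qed
  qed
  then show ?case using d by blast
next
  case (mult g h)
  have d: "\<forall>p\<in>SS. (\<lambda>p. g p * h p) differentiable (at p)" using mult by auto
  have "Dv v (\<lambda>p. g p * h p) \<in> Alg A" for v
  proof (rule Alg.agree[OF Alg.add[OF Alg.mult[of g A "Dv v h"] Alg.mult[of "Dv v g" A h]]])
    show "g \<in> Alg A" "h \<in> Alg A" "Dv v g \<in> Alg A" "Dv v h \<in> Alg A" using mult.IH mult.hyps by (metis surjective_pairing)+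
    show "\<forall>p\<in>SS. Dv v (\<lambda>p. g p * h p) p = g p * Dv v h p + Dv v g p * h p"
    proof
      fix p assume p: "p \<in> SS"
      have "((\<lambda>p. g p * h p) has_derivative (\<lambda>v. g p * frechet_derivative h (at p) v + frechet_derivative g (at p) v * h p)) (at p)"
        using mult p by (intro has_derivative_mult) (auto simp: frechet_derivative_works)
      then have "frechet_derivative (\<lambda>p. g p * h p) (at p) = (\<lambda>v. g p * frechet_derivative h (at p) v + frechet_derivative g (at p) v * h p)"
        by (rule frechet_derivative_at[symmetric])
      then show "Dv v (\<lambda>p. g p * h p) p = g p * Dv v h p + Dv v g p * h p"
        unfolding Dv_def by simp
    qed
  qed
  then show ?case using d by blast
next
  case (agree g h)
  have IH: "\<forall>p\<in>SS. g differentiable (at p)" "\<forall>v. Dv v g \<in> Alg A"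
    using agree.IH by blast+
  have eq: "\<And>x. x \<in> SS \<Longrightarrow> g x = h x" using agree.hyps(2) by simp
  have d: "\<forall>p\<in>SS. h differentiable (at p)"
  proof
    fix p assume p: "p \<in> SS"
    then obtain D where "(g has_derivative D) (at p)" using IH(1) unfolding differentiable_def by blast
    then have "(h has_derivative D) (at p)"
      by (rule has_derivative_transform_within_open[OF _ open_SS p eq])
    then show "h differentiable (at p)" unfolding differentiable_def by blast
  qed
  have "Dv v h \<in> Alg A" for v
  proof (rule Alg.agree[of "Dv v g"])
    show "Dv v g \<in> Alg A" using IH(2) by (rule spec)
    show "\<forall>p\<in>SS. Dv v h p = Dv v g p" using agree.hyps(2) Dv_agree by blast
  qed
  then show ?case using d by blast
qed


context
  fixes A assumes gd: "good A"
begin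

lemma alg_props: "g \<in> Alg A \<Longrightarrow> (\<forall>p\<in>SS. g differentiable (at p)) \<and> (\<forall>v. Dv v g \<in> Alg A)"
  using alg_main[OF gd] by blast

lemma Dv_alg[intro]: "g \<in> Alg A \<Longrightarrow> Dv v g \<in> Alg A"
  using alg_props by blast

lemma alg_hd: "g \<in> Alg A \<Longrightarrow> p \<in> SS \<Longrightarrow> (g has_derivative (\<lambda>v. Dv v g p)) (at p)"
  unfolding Dv_def using alg_props frechet_derivative_works by (metis eta_contract_eq)

lemma alg_cont: "g \<in> Alg A \<Longrightarrow> continuous_on SS g"
  by (metis alg_hd continuous_at_imp_continuous_on has_derivative_continuous)

lemma Dv_linear: "g \<in> Alg A \<Longrightarrow> p \<in> SS \<Longrightarrow> linear (\<lambda>v. Dv v g p)"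
  using alg_hd has_derivative_linear by blast

lemma Dv_scale: "g \<in> Alg A \<Longrightarrow> p \<in> SS \<Longrightarrow> Dv (c *\<^sub>R v) g p = c * Dv v g p"
  using Dv_linear[THEN linear_scale] by simp

lemma Dv_vadd: "g \<in> Alg A \<Longrightarrow> p \<in> SS \<Longrightarrow> Dv (v + w) g p = Dv v g p + Dv w g p"
  using Dv_linear[THEN linear_add] by simp

lemma alg_cmult[intro]: "g \<in> Alg A \<Longrightarrow> (\<lambda>p. c * g p) \<in> Alg A"
  by (rule Alg.mult[OF Alg.const])
lemma alg_minus[intro]: "g \<in> Alg A \<Longrightarrow> (\<lambda>p. - g p) \<in> Alg A"
  using alg_cmult[of g "-1"] by simp
lemma alg_diff[intro]: "g \<in> Alg A \<Longrightarrow> h \<in> Alg A \<Longrightarrow> (\<lambda>p. g p - h p) \<in> Alg A"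
  using Alg.add[OF _ alg_minus, of g h] by simp
lemma alg_pow2[intro]: "g \<in> Alg A \<Longrightarrow> (\<lambda>p. (g p)\<^sup>2) \<in> Alg A"
  using Alg.mult[of g A g] by (simp add: power2_eq_square)
lemma alg_sum[intro]: "(\<And>i. i \<in> I \<Longrightarrow> f i \<in> Alg A) \<Longrightarrow> (\<lambda>p. \<Sum>i\<in>I. f i p) \<in> Alg A"
proof (induction I rule: infinite_finite_induct)
  case (infinite I) then show ?case using Alg.const[of 0] by simp
next
  case empty then show ?case using Alg.const[of 0] by simp
next
  case (insert x F) then show ?case using Alg.add[of "f x" A "\<lambda>p. \<Sum>i\<in>F. f i p"] by simp
qed

lemma Dv_const[simp]: "Dv v (\<lambda>p. c) p = 0"
  unfolding Dv_def by (metis frechet_derivative_at has_derivative_const)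

lemma Dv_add: "g \<in> Alg A \<Longrightarrow> h \<in> Alg A \<Longrightarrow> p \<in> SS \<Longrightarrow> Dv v (\<lambda>p. g p + h p) p = Dv v g p + Dv v h p"
  by (rule Dv_at) (intro has_derivative_add alg_hd)
lemma Dv_mult: "g \<in> Alg A \<Longrightarrow> h \<in> Alg A \<Longrightarrow> p \<in> SS \<Longrightarrow> Dv v (\<lambda>p. g p * h p) p = g p * Dv v h p + Dv v g p * h p"
proof -
  assume a: "g \<in> Alg A" "h \<in> Alg A" "p \<in> SS"
  have "((\<lambda>p. g p * h p) has_derivative (\<lambda>v. g p * Dv v h p + Dv v g p * h p)) (at p)"
    using a by (intro has_derivative_mult alg_hd)
  then show ?thesis by (rule Dv_at)
qed
lemma Dv_cmult: "g \<in> Alg A \<Longrightarrow> p \<in> SS \<Longrightarrow> Dv v (\<lambda>p. c * g p) p = c * Dv v g p"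
  using Dv_mult[OF Alg.const, of g p v c] by simp
lemma Dv_minus: "g \<in> Alg A \<Longrightarrow> p \<in> SS \<Longrightarrow> Dv v (\<lambda>p. - g p) p = - Dv v g p"
  using Dv_cmult[of g p v "-1"] by simp
lemma Dv_diff: "g \<in> Alg A \<Longrightarrow> h \<in> Alg A \<Longrightarrow> p \<in> SS \<Longrightarrow> Dv v (\<lambda>p. g p - h p) p = Dv v g p - Dv v h p"
  using Dv_add[OF _ alg_minus, of g h p v] Dv_minus[of h p v] by simp
lemma Dv_pow2: "g \<in> Alg A \<Longrightarrow> p \<in> SS \<Longrightarrow> Dv v (\<lambda>p. (g p)\<^sup>2) p = 2 * g p * Dv v g p"
  using Dv_mult[of g g p v] by (simp add: power2_eq_square)
lemma Dv_sum: "(\<And>i. i \<in> I \<Longrightarrow> f i \<in> Alg A) \<Longrightarrow> p \<in> SS \<Longrightarrow> Dv v (\<lambda>p. \<Sum>i\<in>I. f i p) p = (\<Sum>i\<in>I. Dv v (f i) p)"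
proof (induction I rule: infinite_finite_induct)
  case (insert x F)
  then show ?case using Dv_add[of "f x" "\<lambda>p. \<Sum>i\<in>F. f i p" p v] alg_sum[of F f] by simp
qed auto

lemma alg_dir:
  assumes g: "g \<in> Alg A" and q: "q + r *\<^sub>R w \<in> SS"
  shows "((\<lambda>r. g (q + r *\<^sub>R w)) has_real_derivative Dv w g (q + r *\<^sub>R w)) (at r)"
proof -
  have "((\<lambda>r. g (q + r *\<^sub>R w)) has_derivative (\<lambda>h. Dv (h *\<^sub>R w) g (q + r *\<^sub>R w))) (at r)"
    using alg_hd[OF g q] by (rule has_derivative_compose[rotated]) (auto intro!: derivative_eq_intros)
  then have "((\<lambda>r. g (q + r *\<^sub>R w)) has_derivative (\<lambda>h. h * Dv w g (q + r *\<^sub>R w))) (at r)"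
    using Dv_scale[OF g q] by simp
  then show ?thesis unfolding has_field_derivative_def
    by (rule has_derivative_eq_rhs) (auto simp: fun_eq_iff)
qed

lemma alg_ftc:
  assumes g: "g \<in> Alg A" and b: "0 \<le> b" and q: "\<And>r. r \<in> {0..b} \<Longrightarrow> q + r *\<^sub>R w \<in> SS"
  shows "integral {0..b} (\<lambda>r. Dv w g (q + r *\<^sub>R w)) = g (q + b *\<^sub>R w) - g q"
proof -
  have "((\<lambda>r. Dv w g (q + r *\<^sub>R w)) has_integral (g (q + b *\<^sub>R w) - g (q + 0 *\<^sub>R w))) {0..b}"
  proof (rule fundamental_theorem_of_calculus[OF b])
    fix x assume x: "x \<in> {0..b}"
    have "((\<lambda>r. g (q + r *\<^sub>R w)) has_real_derivative Dv w g (q + x *\<^sub>R w)) (at x)"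
      by (rule alg_dir[OF g q[OF x]])
    then have "((\<lambda>r. g (q + r *\<^sub>R w)) has_real_derivative Dv w g (q + x *\<^sub>R w)) (at x within {0..b})"
      by (rule DERIV_subset) simp
    then show "((\<lambda>r. g (q + r *\<^sub>R w)) has_vector_derivative Dv w g (q + x *\<^sub>R w)) (at x within {0..b})"
      by (simp add: has_real_derivative_iff_has_vector_derivative)
  qed
  then show ?thesis by (simp add: integral_unique)
qed

end

context
  fixes A assumes gd: "good A"
begin

lemma schwarz:
  assumes g: "g \<in> Alg A" and p: "p \<in> SS"
  shows "Dv w (Dv v g) p = Dv v (Dv w g) p"
proof -
  note hd = alg_hd[OF gd] and Dal = Dv_alg[OF gd]
  obtain \<delta> where d0: "\<delta> > 0" and dS: "ball p \<delta> \<subseteq> SS"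
    using open_SS p openE by blast
  define N where "N = norm v + norm w + 1"
  have N0: "N > 0" unfolding N_def by (simp add: add_nonneg_pos)
  define r0 where "r0 = \<delta> / (2 * N)"
  have r00: "r0 > 0" unfolding r0_def using d0 N0 by simp
  have inS: "p + a *\<^sub>R v + r *\<^sub>R w \<in> SS" if "\<bar>a\<bar> < r0" "\<bar>r\<bar> \<le> r0" for a r
  proof -
    have "norm (a *\<^sub>R v + r *\<^sub>R w) \<le> \<bar>a\<bar> * norm v + \<bar>r\<bar> * norm w"
      by (metis norm_scaleR norm_triangle_le order_refl add_mono)
    also have "\<dots> \<le> r0 * norm v + r0 * norm w"
      using that by (intro add_mono mult_right_mono) auto
    also have "\<dots> < r0 * N" unfolding N_def using r00 by (simp add: algebra_simps)
    also have "\<dots> = \<delta> / 2" unfolding r0_def using N0 by simp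
    finally have "norm (a *\<^sub>R v + r *\<^sub>R w) < \<delta>" using d0 by simp
    moreover have e: "dist p (p + a *\<^sub>R v + r *\<^sub>R w) = norm (a *\<^sub>R v + r *\<^sub>R w)"
      by (metis add.assoc add_diff_cancel_left' dist_commute dist_norm)
    ultimately have "p + a *\<^sub>R v + r *\<^sub>R w \<in> ball p \<delta>" by (simp only: mem_ball e)
    then show ?thesis using dS by blast
  qed
  have inS2: "p + r *\<^sub>R w + a *\<^sub>R v \<in> SS" if "\<bar>a\<bar> < r0" "\<bar>r\<bar> \<le> r0" for a r
  proof -
    have eq: "p + r *\<^sub>R w + a *\<^sub>R v = p + a *\<^sub>R v + r *\<^sub>R w" by (simp add: algebra_simps)
    show ?thesis by (subst eq) (rule inS[OF that])
  qed
  define K where "K r = Dv v (Dv w g) (p + r *\<^sub>R w) - Dv w (Dv v g) (p + r *\<^sub>R w)" for r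
  have Kzero: "integral {0..b} K = 0" if b: "0 \<le> b" "b \<le> r0" for b
  proof -
    have S1: "p + r *\<^sub>R w \<in> SS" if "r \<in> {0..b}" for r
      using inS[of 0 r] that b r00 by auto
    have ftc1: "integral {0..b} (\<lambda>r. Dv w (Dv v g) (p + r *\<^sub>R w)) = Dv v g (p + b *\<^sub>R w) - Dv v g p"
      using alg_ftc[OF gd Dal[OF g] b(1) S1] .
    define H where "H a = integral {0..b} (\<lambda>r. Dv w g (p + r *\<^sub>R w + a *\<^sub>R v))" for a
    have H1: "(H has_real_derivative integral {0..b} (\<lambda>r. Dv v (Dv w g) (p + r *\<^sub>R w + 0 *\<^sub>R v))) (at 0 within ball 0 r0)"
      unfolding H_def cbox_interval[symmetric]
    proof (rule leibniz_rule_field_derivative)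
      fix a r :: real assume a: "a \<in> ball 0 r0" and r: "r \<in> cbox 0 b"
      have "\<bar>a\<bar> < r0" using a by simp
      moreover have "\<bar>r\<bar> \<le> r0" using r b by (simp add: cbox_interval)
      ultimately have "p + r *\<^sub>R w + a *\<^sub>R v \<in> SS" by (rule inS2)
      then have "((\<lambda>a. Dv w g (p + r *\<^sub>R w + a *\<^sub>R v)) has_real_derivative
          Dv v (Dv w g) (p + r *\<^sub>R w + a *\<^sub>R v)) (at a)"
        by (rule alg_dir[OF gd Dal[OF g]])
      then show "((\<lambda>a. Dv w g (p + r *\<^sub>R w + a *\<^sub>R v)) has_real_derivative
          Dv v (Dv w g) (p + r *\<^sub>R w + a *\<^sub>R v)) (at a within ball 0 r0)"
        by (rule DERIV_subset) simp
    next
      fix a assume a: "a \<in> ball (0::real) r0"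
      have "continuous_on (cbox 0 b) (\<lambda>r. Dv w g (p + r *\<^sub>R w + a *\<^sub>R v))"
        using a b
        by (intro continuous_on_compose2[OF alg_cont[OF gd Dal[OF g]]] continuous_intros)
           (auto intro!: inS2 simp: cbox_interval)
      then show "(\<lambda>r. Dv w g (p + r *\<^sub>R w + a *\<^sub>R v)) integrable_on cbox 0 b"
        by (rule integrable_continuous)
    next
      have "continuous_on (ball 0 r0 \<times> cbox 0 b) (\<lambda>q. Dv v (Dv w g) (p + snd q *\<^sub>R w + fst q *\<^sub>R v))"
        using b
        by (intro continuous_on_compose2[OF alg_cont[OF gd Dal[OF Dal[OF g]]], where f="\<lambda>q. p + snd q *\<^sub>R w + fst q *\<^sub>R v"] continuous_intros)
           (auto intro!: inS2 simp: cbox_interval)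
      then show "continuous_on (ball 0 r0 \<times> cbox 0 b) (\<lambda>(a, r). Dv v (Dv w g) (p + r *\<^sub>R w + a *\<^sub>R v))"
        by (simp add: split_beta)
    qed (use r00 in auto)
    have H2: "(H has_real_derivative Dv v g (p + b *\<^sub>R w) - Dv v g p) (at 0 within ball 0 r0)"
    proof -
      have "((\<lambda>a. g (p + b *\<^sub>R w + a *\<^sub>R v) - g (p + a *\<^sub>R v)) has_real_derivative
             Dv v g (p + b *\<^sub>R w + 0 *\<^sub>R v) - Dv v g (p + 0 *\<^sub>R v)) (at 0)"
        using inS[of 0 b] inS[of 0 0] b r00
        by (intro DERIV_diff alg_dir[OF gd g]) auto
      then have D0: "((\<lambda>a. g (p + b *\<^sub>R w + a *\<^sub>R v) - g (p + a *\<^sub>R v)) has_real_derivative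
             Dv v g (p + b *\<^sub>R w) - Dv v g p) (at 0 within ball 0 r0)"
        by (simp add: has_field_derivative_at_within)
      have Heq: "H a = g (p + b *\<^sub>R w + a *\<^sub>R v) - g (p + a *\<^sub>R v)" if "a \<in> ball 0 r0" for a
      proof -
        have "integral {0..b} (\<lambda>r. Dv w g ((p + a *\<^sub>R v) + r *\<^sub>R w)) = g ((p + a *\<^sub>R v) + b *\<^sub>R w) - g (p + a *\<^sub>R v)"
          using that b by (intro alg_ftc[OF gd g b(1)]) (auto intro!: inS)
        then show ?thesis unfolding H_def by (simp add: add_ac)
      qed
      show ?thesis
      proof (rule has_field_derivative_transform_within[OF D0, where d=r0])
        show "0 < r0" by (rule r00)
        show "0 \<in> ball (0::real) r0" using r00 by simp
        show "g (p + b *\<^sub>R w + x *\<^sub>R v) - g (p + x *\<^sub>R v) = H x" if "x \<in> ball 0 r0" for x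
          using Heq[OF that] by simp
      qed
    qed
    have "Dv v g (p + b *\<^sub>R w) - Dv v g p = integral {0..b} (\<lambda>r. Dv v (Dv w g) (p + r *\<^sub>R w))"
    proof -
      have o: "at (0::real) within ball 0 r0 = at 0" by (rule at_within_open) (simp_all add: r00)
      have "Dv v g (p + b *\<^sub>R w) - Dv v g p = integral {0..b} (\<lambda>r. Dv v (Dv w g) (p + r *\<^sub>R w + 0 *\<^sub>R v))"
        using H2 H1 unfolding o by (rule DERIV_unique)
      then show ?thesis by simp
    qed
    then show ?thesis unfolding K_def using ftc1
      apply (subst integral_diff)
      by (auto intro!: integrable_continuous_interval continuous_on_compose2[OF alg_cont[OF gd Dal[OF Dal[OF g]]]] continuous_intros S1)
  qed
  have Kc: "continuous_on {0..r0} K"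
    unfolding K_def
    by (intro continuous_intros continuous_on_compose2[OF alg_cont[OF gd Dal[OF Dal[OF g]]]])
       (use r00 in \<open>auto intro!: inS[of 0, simplified]\<close>)
  have "((\<lambda>u. integral {0..u} K) has_vector_derivative K 0) (at 0 within {0..r0})"
    using integral_has_vector_derivative[OF Kc] r00 by auto
  moreover have "((\<lambda>u. integral {0..u} K) has_vector_derivative 0) (at 0 within {0..r0})"
    by (rule has_vector_derivative_transform_within[where d=1 and f="\<lambda>u. 0"]) (use r00 in \<open>auto simp: Kzero\<close>)
  ultimately have "K 0 = 0"
    using vector_derivative_unique_within_closed_interval[of 0 r0 0] r00 by auto
  then show ?thesis unfolding K_def by simp
qed

end

lemma One_cart_nth[simp]: "(One :: real^'n) $ j = 1"
proof -
  have "(One :: real^'n) $ j = (\<Sum>b\<in>(Basis::(real^'n) set). b \<bullet> axis j 1)"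
    by (simp add: cart_eq_inner_axis inner_sum_left)
  also have "\<dots> = 1"
    by (subst sum.remove[of _ "axis j 1"]) (auto simp: inner_not_same_Basis intro!: sum.neutral)
  finally show ?thesis .
qed

lemma One_cart_nth'[simp]: "(\<Sum>x\<in>(Basis::(real^'n) set). x $ j) = 1"
  using One_cart_nth[of j] by (simp add: sum_component)

lemma box_split_le:
  fixes i :: 3
  assumes c: "c \<le> 1"
  shows "Qcube \<inter> {x. x \<bullet> axis i 1 \<le> c} = cbox 0 (One - (1 - c) *\<^sub>R axis i (1::real))"
proof (rule set_eqI)
  fix x :: sp
  have comp: "(One - (1 - c) *\<^sub>R axis i (1::real)) $ j = (if j = i then c else 1)" for j
    by (simp add: axis_def)
  have "(\<forall>j. 0 \<le> x $ j \<and> x $ j \<le> 1) \<and> x $ i \<le> c \<longleftrightarrow> (\<forall>j. 0 \<le> x $ j \<and> x $ j \<le> (if j = i then c else 1))"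
  proof
    assume L: "(\<forall>j. 0 \<le> x $ j \<and> x $ j \<le> 1) \<and> x $ i \<le> c"
    show "\<forall>j. 0 \<le> x $ j \<and> x $ j \<le> (if j = i then c else 1)" using L by auto
  next
    assume R: "\<forall>j. 0 \<le> x $ j \<and> x $ j \<le> (if j = i then c else 1)"
    have "0 \<le> x $ j \<and> x $ j \<le> 1" for j
    proof -
      from R have "0 \<le> x $ j \<and> x $ j \<le> (if j = i then c else 1)" by blast
      then show ?thesis using c by (auto split: if_splits)
    qed
    moreover from R have "x $ i \<le> c" by (metis (full_types))
    ultimately show "(\<forall>j. 0 \<le> x $ j \<and> x $ j \<le> 1) \<and> x $ i \<le> c" by blast
  qed
  then show "x \<in> Qcube \<inter> {x. x \<bullet> axis i 1 \<le> c} \<longleftrightarrow> x \<in> cbox 0 (One - (1 - c) *\<^sub>R axis i (1::real))"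
    unfolding Qcube_def Int_iff mem_Collect_eq mem_box_cart comp inner_axis by simp
qed

lemma box_split_ge:
  fixes i :: 3
  assumes c: "0 \<le> c"
  shows "Qcube \<inter> {x. x \<bullet> axis i 1 \<ge> c} = cbox (c *\<^sub>R axis i (1::real)) One"
proof (rule set_eqI)
  fix x :: sp
  have comp: "(c *\<^sub>R axis i (1::real)) $ j = (if j = i then c else 0)" for j
    by (simp add: axis_def)
  have "(\<forall>j. 0 \<le> x $ j \<and> x $ j \<le> 1) \<and> c \<le> x $ i \<longleftrightarrow> (\<forall>j. (if j = i then c else 0) \<le> x $ j \<and> x $ j \<le> 1)"
  proof
    assume L: "(\<forall>j. 0 \<le> x $ j \<and> x $ j \<le> 1) \<and> c \<le> x $ i"
    show "\<forall>j. (if j = i then c else 0) \<le> x $ j \<and> x $ j \<le> 1" using L by auto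
  next
    assume R: "\<forall>j. (if j = i then c else 0) \<le> x $ j \<and> x $ j \<le> 1"
    have "0 \<le> x $ j \<and> x $ j \<le> 1" for j
    proof -
      from R have "(if j = i then c else 0) \<le> x $ j \<and> x $ j \<le> 1" by blast
      then show ?thesis using c by (auto split: if_splits)
    qed
    moreover from R have "c \<le> x $ i" by (metis (full_types))
    ultimately show "(\<forall>j. 0 \<le> x $ j \<and> x $ j \<le> 1) \<and> c \<le> x $ i" by blast
  qed
  then show "x \<in> Qcube \<inter> {x. x \<bullet> axis i 1 \<ge> c} \<longleftrightarrow> x \<in> cbox (c *\<^sub>R axis i (1::real)) One"
    unfolding Qcube_def Int_iff mem_Collect_eq mem_box_cart comp inner_axis by simp
qed

lemma integral_shift:
  fixes f :: "sp \<Rightarrow> real"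
  assumes "continuous_on UNIV f"
  shows "integral (cbox a b) (\<lambda>x. f (x + c)) = integral (cbox (a + c) (b + c)) f"
proof -
  have "(f has_integral integral (cbox (a + c) (b + c)) f) (cbox (a + c) (b + c))"
    using assms by (intro integrable_integral integrable_continuous continuous_on_subset[OF assms]) auto
  then have "((f \<circ> (+) c) has_integral integral (cbox (a + c) (b + c)) f) (cbox a b)"
    using has_integral_shift_cbox_iff by blast
  then show ?thesis by (simp add: o_def add.commute integral_unique)
qed

lemma Qsplit:
  fixes f :: "sp \<Rightarrow> real" and i :: 3
  assumes "continuous_on UNIV f" and c: "0 \<le> c" "c \<le> 1"
  shows "integral Qcube f = integral (cbox 0 (One - (1 - c) *\<^sub>R axis i (1::real))) f
     + integral (cbox (c *\<^sub>R axis i (1::real)) One) f"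
proof -
  have "f integrable_on Qcube" unfolding Qcube_def
    by (intro integrable_continuous continuous_on_subset[OF assms(1)]) auto
  then show ?thesis
    using integral_split[of f 0 One "axis i 1" c] unfolding Qcube_def[symmetric] box_split_le[OF c(2)] box_split_ge[OF c(1)]
    by (simp add: Qcube_def)
qed

lemma periodic_shift_int:
  fixes h :: "sp \<Rightarrow> real" and i :: 3
  assumes per: "periodic h" and hc: "continuous_on UNIV h" and s: "0 \<le> s" "s \<le> 1"
  shows "integral Qcube (\<lambda>x. h (x + s *\<^sub>R axis i 1)) = integral Qcube h"
proof -
  let ?e = "axis i (1::real)"
  have c1: "continuous_on UNIV (\<lambda>x. h (x + s *\<^sub>R ?e))"
    by (intro continuous_on_compose2[OF hc] continuous_intros) auto
  have eq: "h (x + s *\<^sub>R ?e) = h (x + (s - 1) *\<^sub>R ?e)" for x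
  proof -
    have "x + s *\<^sub>R ?e = (x + (s - 1) *\<^sub>R ?e) + axis i 1" by (simp add: algebra_simps)
    then show ?thesis using per unfolding periodic_def by metis
  qed
  have "integral Qcube (\<lambda>x. h (x + s *\<^sub>R ?e)) =
     integral (cbox 0 (One - (1 - (1 - s)) *\<^sub>R ?e)) (\<lambda>x. h (x + s *\<^sub>R ?e))
     + integral (cbox ((1 - s) *\<^sub>R ?e) One) (\<lambda>x. h (x + (s - 1) *\<^sub>R ?e))"
    using Qsplit[OF c1, of "1 - s" i] eq s by simp
  also have "\<dots> = integral (cbox (s *\<^sub>R ?e) One) h + integral (cbox 0 (One - (1 - s) *\<^sub>R ?e)) h"
  proof -
    have "integral (cbox 0 (One - (1 - (1 - s)) *\<^sub>R ?e)) (\<lambda>x. h (x + s *\<^sub>R ?e))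
        = integral (cbox (0 + s *\<^sub>R ?e) (One - (1 - (1 - s)) *\<^sub>R ?e + s *\<^sub>R ?e)) h"
      by (rule integral_shift[OF hc])
    moreover have "integral (cbox ((1 - s) *\<^sub>R ?e) One) (\<lambda>x. h (x + (s - 1) *\<^sub>R ?e))
        = integral (cbox ((1 - s) *\<^sub>R ?e + (s - 1) *\<^sub>R ?e) (One + (s - 1) *\<^sub>R ?e)) h"
      by (rule integral_shift[OF hc])
    moreover have "(1 - s) *\<^sub>R ?e + (s - 1) *\<^sub>R ?e = 0" by (simp add: algebra_simps)
    moreover have "One + (s - 1) *\<^sub>R ?e = One - (1 - s) *\<^sub>R ?e" by (simp add: algebra_simps)
    moreover have "One - (1 - (1 - s)) *\<^sub>R ?e + s *\<^sub>R ?e = One" by (simp add: algebra_simps)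
    ultimately show ?thesis by simp
  qed
  also have "\<dots> = integral Qcube h"
    using Qsplit[OF hc, of s i] s by simp
  finally show ?thesis .
qed


lemma periodic_int_deriv:
  fixes h :: "sp \<Rightarrow> real" and i :: 3
  assumes per: "periodic h" and hd: "\<And>x. (h has_derivative h' x) (at x)"
    and hc': "continuous_on UNIV (\<lambda>x. h' x (axis i 1))"
  shows "integral Qcube (\<lambda>x. h' x (axis i 1)) = 0"
proof -
  let ?e = "axis i (1::real)"
  have hc: "continuous_on UNIV h"
    by (metis continuous_at_imp_continuous_on has_derivative_continuous hd)
  define I where "I s = integral Qcube (\<lambda>x. h (x + s *\<^sub>R ?e))" for s
  have dir: "((\<lambda>s. h (x + s *\<^sub>R ?e)) has_real_derivative h' (x + s *\<^sub>R ?e) ?e) (at s within UNIV)" for x s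
  proof -
    have "((\<lambda>s. h (x + s *\<^sub>R ?e)) has_derivative (\<lambda>d. h' (x + s *\<^sub>R ?e) (d *\<^sub>R ?e))) (at s)"
      using hd by (rule has_derivative_compose[rotated]) (auto intro!: derivative_eq_intros)
    moreover have "h' (x + s *\<^sub>R ?e) (d *\<^sub>R ?e) = d * h' (x + s *\<^sub>R ?e) ?e" for d
      using has_derivative_linear[OF hd] linear_scale by (metis real_scaleR_def)
    ultimately have "((\<lambda>s. h (x + s *\<^sub>R ?e)) has_derivative (\<lambda>d. d * h' (x + s *\<^sub>R ?e) ?e)) (at s)" by simp
    then show ?thesis unfolding has_field_derivative_def
      by (rule has_derivative_eq_rhs) (auto simp: fun_eq_iff)
  qed
  have D1: "(I has_real_derivative integral Qcube (\<lambda>x. h' (x + 0 *\<^sub>R ?e) ?e)) (at 0 within UNIV)"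
    unfolding I_def Qcube_def
  proof (rule leibniz_rule_field_derivative)
    show "(\<lambda>x. h (x + s *\<^sub>R ?e)) integrable_on cbox 0 One" for s
      by (intro integrable_continuous continuous_on_compose2[OF hc] continuous_intros) auto
    have "continuous_on (UNIV \<times> cbox 0 One) (\<lambda>p. h' (snd p + fst p *\<^sub>R ?e) ?e)"
      by (intro continuous_on_compose2[OF hc', where f="\<lambda>p. snd p + fst p *\<^sub>R ?e"] continuous_intros) auto
    then show "continuous_on (UNIV \<times> cbox 0 One) (\<lambda>(s, x). h' (x + s *\<^sub>R ?e) ?e)"
      by (simp add: split_beta)
  qed (use dir in auto)
  have D1': "(I has_vector_derivative integral Qcube (\<lambda>x. h' x ?e)) (at 0 within {0..1})"
    using D1 by (simp add: has_real_derivative_iff_has_vector_derivative[symmetric]) (rule DERIV_subset, auto)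
  have D2: "(I has_vector_derivative 0) (at 0 within {0..1})"
    by (rule has_vector_derivative_transform_within[where d=1 and f="\<lambda>u. integral Qcube h"])
       (auto simp: I_def periodic_shift_int[OF per hc])
  show ?thesis
    using vector_derivative_unique_within_closed_interval[of 0 1 0 I, unfolded cbox_interval] D1' D2 by auto
qed

definition sl :: "(real \<times> sp \<Rightarrow> real) \<Rightarrow> real \<Rightarrow> sp \<Rightarrow> real" where
  "sl g t = (\<lambda>x. g (t, x))"

definition ei :: "3 \<Rightarrow> real \<times> sp" where "ei i = (0, axis i 1)"
definition et :: "real \<times> sp" where "et = (1, 0)"

definition Lap :: "(real \<times> sp \<Rightarrow> real) \<Rightarrow> real \<times> sp \<Rightarrow> real" where
  "Lap g = (\<lambda>p. \<Sum>i\<in>UNIV. Dv (ei i) (Dv (ei i) g) p)"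

definition Per :: "(real \<times> sp \<Rightarrow> real) \<Rightarrow> bool" where
  "Per g \<longleftrightarrow> (\<forall>s>0. \<forall>x i. g (s, x + axis i 1) = g (s, x))"

lemma SS_iff[simp]: "(t, x) \<in> SS \<longleftrightarrow> t > 0" by (simp add: SS_def)

context
  fixes A assumes gd: "good A"
begin

lemma hd_sl:
  assumes g: "g \<in> Alg A" and t: "t > 0"
  shows "(sl g t has_derivative (\<lambda>h. Dv (0, h) g (t, x))) (at x)"
proof -
  have "((\<lambda>x. (t, x)) has_derivative (\<lambda>h. (0, h))) (at x)"
    by (auto intro!: derivative_eq_intros)
  from has_derivative_compose[OF this alg_hd[OF gd g]] t show ?thesis
    by (simp add: sl_def o_def)
qed

lemma pd_sl: assumes g: "g \<in> Alg A" and t: "t > 0" shows "pd i (sl g t) = sl (Dv (ei i) g) t"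
proof (rule ext)
  fix x
  have "frechet_derivative (sl g t) (at x) = (\<lambda>h. Dv (0, h) g (t, x))"
    by (rule frechet_derivative_at[symmetric, OF hd_sl[OF g t]])
  then show "pd i (sl g t) x = sl (Dv (ei i) g) t x" unfolding pd_def sl_def ei_def by simp
qed

lemma pd_sl': "g \<in> Alg A \<Longrightarrow> t > 0 \<Longrightarrow> pd i (sl g t) x = Dv (ei i) g (t, x)"
  using pd_sl by (simp add: sl_def)

lemma grad_sl: "g \<in> Alg A \<Longrightarrow> t > 0 \<Longrightarrow> grad (sl g t) x = (\<chi> i. Dv (ei i) g (t, x))"
  unfolding grad_def using pd_sl' by simp

lemma alg_Lap[intro]: "g \<in> Alg A \<Longrightarrow> Lap g \<in> Alg A"
  unfolding Lap_def by (intro alg_sum[OF gd] Dv_alg[OF gd])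

lemma lapl_sl: "g \<in> Alg A \<Longrightarrow> t > 0 \<Longrightarrow> lapl (sl g t) x = Lap g (t, x)"
  unfolding lapl_def Lap_def using pd_sl Dv_alg[OF gd] by (simp add: sl_def)

lemma deriv_sl:
  assumes g: "g \<in> Alg A" and t: "t > 0"
  shows "((\<lambda>s. g (s, x)) has_real_derivative Dv et g (t, x)) (at t)"
proof -
  have "((\<lambda>s. (s, x)) has_derivative (\<lambda>h. h *\<^sub>R et)) (at t)"
    unfolding et_def by (auto intro!: derivative_eq_intros)
  from has_derivative_compose[OF this alg_hd[OF gd g]] t
  have "((\<lambda>s. g (s, x)) has_derivative (\<lambda>h. h * Dv et g (t, x))) (at t)"
    by (simp add: o_def Dv_scale[OF gd g])
  then show ?thesis unfolding has_field_derivative_def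
    by (rule has_derivative_eq_rhs) (auto simp: fun_eq_iff)
qed

lemma cont_sl: "g \<in> Alg A \<Longrightarrow> t > 0 \<Longrightarrow> continuous_on UNIV (sl g t)"
  unfolding sl_def
  by (intro continuous_on_compose2[OF alg_cont[OF gd]] continuous_intros) auto

lemma int_sl: "g \<in> Alg A \<Longrightarrow> t > 0 \<Longrightarrow> (\<lambda>x. g (t, x)) integrable_on Qcube"
  unfolding Qcube_def using cont_sl[unfolded sl_def]
  by (intro integrable_continuous) (metis continuous_on_subset subset_UNIV)

lemma int_deriv:
  assumes g: "g \<in> Alg A" and t: "t > 0"
  shows "((\<lambda>s. integral Qcube (\<lambda>x. g (s, x))) has_real_derivative integral Qcube (\<lambda>x. Dv et g (t, x))) (at t)"
proof -
  have "((\<lambda>s. integral (cbox 0 One) (\<lambda>x. g (s, x))) has_real_derivative integral (cbox 0 One) (\<lambda>x. Dv et g (t, x))) (at t within {0<..})"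
  proof (rule leibniz_rule_field_derivative)
    show "((\<lambda>s. g (s, x)) has_real_derivative Dv et g (s, x)) (at s within {0<..})" if "s \<in> {0<..}" for s x
      using deriv_sl[OF g] that by (auto intro: DERIV_subset)
    show "(\<lambda>x. g (s, x)) integrable_on cbox 0 One" if "s \<in> {0<..}" for s
      using int_sl[OF g] that unfolding Qcube_def by auto
    have "continuous_on ({0<..} \<times> cbox 0 One) (Dv et g)"
      by (rule continuous_on_subset[OF alg_cont[OF gd Dv_alg[OF gd g]]]) (auto simp: SS_def)
    then show "continuous_on ({0<..} \<times> cbox 0 One) (\<lambda>(s, x). Dv et g (s, x))"
      by (simp add: case_prod_eta)
  qed (use t in auto)
  then show ?thesis using t at_within_open[of t "{0<..}"] by (simp add: Qcube_def)
qed

lemma Per_Dv: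
  assumes g: "g \<in> Alg A" and P: "Per g"
  shows "Per (Dv v g)"
  unfolding Per_def
proof (intro allI impI)
  fix s :: real and x i assume s: "s > 0"
  define c :: "real \<times> sp" where "c = (0, axis i 1)"
  have eq: "\<forall>p\<in>SS. g (p + c) = g p"
    using P unfolding Per_def c_def SS_def by auto
  have tr: "((\<lambda>p. p + c) has_derivative (\<lambda>v. v)) (at (s, x))"
    by (auto intro!: derivative_eq_intros)
  have inS: "(s, x) + c \<in> SS" using s by (simp add: c_def)
  have "((\<lambda>p. g (p + c)) has_derivative (\<lambda>v. Dv v g ((s, x) + c))) (at (s, x))"
    using has_derivative_compose[OF tr alg_hd[OF gd g inS]] by (simp add: o_def)
  then have "Dv v (\<lambda>p. g (p + c)) (s, x) = Dv v g ((s, x) + c)"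
    by (rule Dv_at)
  moreover have "Dv v (\<lambda>p. g (p + c)) (s, x) = Dv v g (s, x)"
    using Dv_agree[OF eq] s by simp
  ultimately show "Dv v g (s, x + axis i 1) = Dv v g (s, x)" by (simp add: c_def)
qed

lemma ibp0:
  assumes g: "g \<in> Alg A" and P: "Per g" and t: "t > 0"
  shows "integral Qcube (\<lambda>x. Dv (ei i) g (t, x)) = 0"
proof -
  have "integral Qcube (\<lambda>x. (\<lambda>h. Dv (0, h) g (t, x)) (axis i 1)) = 0"
  proof (rule periodic_int_deriv)
    show "periodic (sl g t)" using P t unfolding Per_def periodic_def sl_def by auto
    show "(sl g t has_derivative (\<lambda>h. Dv (0, h) g (t, x))) (at x)" for x using hd_sl[OF g t] .
    show "continuous_on UNIV (\<lambda>x. Dv (0, axis i 1) g (t, x))"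
      using cont_sl[OF Dv_alg[OF gd g] t] by (simp add: sl_def)
  qed
  then show ?thesis by (simp add: ei_def)
qed

end

lemma Per_const[intro]: "Per (\<lambda>p. c)" by (simp add: Per_def)
lemma Per_add[intro]: "Per g \<Longrightarrow> Per h \<Longrightarrow> Per (\<lambda>p. g p + h p)" by (simp add: Per_def)
lemma Per_mult[intro]: "Per g \<Longrightarrow> Per h \<Longrightarrow> Per (\<lambda>p. g p * h p)" by (simp add: Per_def)
lemma Per_diff[intro]: "Per g \<Longrightarrow> Per h \<Longrightarrow> Per (\<lambda>p. g p - h p)" by (simp add: Per_def)
lemma Per_sum[intro]: "(\<And>i. i \<in> I \<Longrightarrow> Per (f i)) \<Longrightarrow> Per (\<lambda>p. \<Sum>i\<in>I. f i p)" by (simp add: Per_def)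

lemma intQ: fixes f :: "sp \<Rightarrow> real" assumes c: "continuous_on UNIV f" shows "f integrable_on Qcube"
proof -
  have "continuous_on (cbox 0 One) f" using continuous_on_subset[OF c] by simp
  then show ?thesis unfolding Qcube_def by (rule integrable_continuous)
qed

lemma intQ_add: fixes f g :: "sp \<Rightarrow> real" shows "continuous_on UNIV f \<Longrightarrow> continuous_on UNIV g \<Longrightarrow>
   integral Qcube (\<lambda>x. f x + g x) = integral Qcube f + integral Qcube g"
  by (intro integral_add intQ)
lemma intQ_diff: fixes f g :: "sp \<Rightarrow> real" shows "continuous_on UNIV f \<Longrightarrow> continuous_on UNIV g \<Longrightarrow>
   integral Qcube (\<lambda>x. f x - g x) = integral Qcube f - integral Qcube g"
  by (intro integral_diff intQ)
lemma intQ_cmult: "integral Qcube (\<lambda>x. c * f x) = c * (integral Qcube f :: real)"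
  by simp

context
  fixes A assumes gd: "good A"
begin

lemma cont_alg[continuous_intros]: "g \<in> Alg A \<Longrightarrow> t > 0 \<Longrightarrow> continuous_on S (\<lambda>x. g (t, x))"
  using cont_sl[OF gd] unfolding sl_def by (metis continuous_on_subset subset_UNIV)

lemma mem_simps[simp]:
  "g \<in> Alg A \<Longrightarrow> Dv v g \<in> Alg A"
  "(\<lambda>p. c) \<in> Alg A"
  "g \<in> Alg A \<Longrightarrow> h \<in> Alg A \<Longrightarrow> (\<lambda>p. g p + h p) \<in> Alg A"
  "g \<in> Alg A \<Longrightarrow> h \<in> Alg A \<Longrightarrow> (\<lambda>p. g p - h p) \<in> Alg A"
  "g \<in> Alg A \<Longrightarrow> h \<in> Alg A \<Longrightarrow> (\<lambda>p. g p * h p) \<in> Alg A"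
  "g \<in> Alg A \<Longrightarrow> (\<lambda>p. c * g p) \<in> Alg A"
  "g \<in> Alg A \<Longrightarrow> (\<lambda>p. - g p) \<in> Alg A"
  "g \<in> Alg A \<Longrightarrow> (\<lambda>p. (g p)\<^sup>2) \<in> Alg A"
  "(\<And>i. i \<in> I \<Longrightarrow> f i \<in> Alg A) \<Longrightarrow> (\<lambda>p. \<Sum>i\<in>I. f i p) \<in> Alg A"
  "g \<in> Alg A \<Longrightarrow> Lap g \<in> Alg A"
           apply (rule Dv_alg[OF gd], assumption)
          apply (rule Alg.const)
         apply (rule Alg.add, assumption, assumption)
        apply (rule alg_diff[OF gd], assumption, assumption)
       apply (rule Alg.mult, assumption, assumption)
      apply (rule alg_cmult[OF gd], assumption)
     apply (rule alg_minus[OF gd], assumption)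
    apply (rule alg_pow2[OF gd], assumption)
   apply (rule alg_sum[OF gd], assumption)
  apply (rule alg_Lap[OF gd], assumption)
  done

lemmas Dvs = Dv_add[OF gd] Dv_mult[OF gd] Dv_cmult[OF gd] Dv_minus[OF gd] Dv_diff[OF gd]
  Dv_pow2[OF gd] Dv_sum[OF gd] Dv_const

lemma Dv_swap_agree: "g \<in> Alg A \<Longrightarrow> p \<in> SS \<Longrightarrow> Dv w (Dv v (Dv u g)) p = Dv w (Dv u (Dv v g)) p"
  by (rule Dv_agree) (auto intro: schwarz[OF gd])

lemma Dv_Lap: assumes g: "g \<in> Alg A" and p: "p \<in> SS"
  shows "Dv v (Lap g) p = Lap (Dv v g) p"
proof -
  have "Dv v (Lap g) p = (\<Sum>i\<in>UNIV. Dv v (Dv (ei i) (Dv (ei i) g)) p)"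
    unfolding Lap_def using g p by (simp add: Dvs)
  also have "\<dots> = (\<Sum>i\<in>UNIV. Dv (ei i) (Dv v (Dv (ei i) g)) p)"
    using schwarz[OF gd _ p] g by simp
  also have "\<dots> = (\<Sum>i\<in>UNIV. Dv (ei i) (Dv (ei i) (Dv v g)) p)"
    using Dv_swap_agree[OF g p] by simp
  finally show ?thesis unfolding Lap_def .
qed

lemma ibp_sum:
  assumes H: "\<And>i. H i \<in> Alg A" "\<And>i. Per (H i)" and t: "t > 0"
  shows "integral Qcube (\<lambda>x. \<Sum>i\<in>UNIV. Dv (ei i) (H i) (t, x)) = 0"
proof -
  have "integral Qcube (\<lambda>x. \<Sum>i\<in>UNIV. Dv (ei i) (H i) (t, x)) = (\<Sum>i\<in>UNIV. integral Qcube (\<lambda>x. Dv (ei i) (H i) (t, x)))"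
    by (rule integral_sum) (auto intro!: intQ cont_alg Dv_alg[OF gd] H t)
  also have "\<dots> = 0" using ibp0[OF gd H(1) H(2) t] by simp
  finally show ?thesis .
qed

end

context
  fixes A assumes gd: "good A"
begin

lemma energy_generic:
  fixes \<Phi> Pp :: "real \<times> sp \<Rightarrow> real" and U :: "3 \<Rightarrow> real \<times> sp \<Rightarrow> real"
    and k \<epsilon> \<gamma> \<mu> M1 M2 \<alpha> \<beta> t :: real
  assumes mem: "\<Phi> \<in> Alg A" "Pp \<in> Alg A" "\<And>j. U j \<in> Alg A"
    and per: "Per \<Phi>" "Per Pp" "\<And>j. Per (U j)"
    and t: "t > 0" and eps: "\<epsilon> > 0"
  defines "Fj \<equiv> \<lambda>p. - \<epsilon> * Lap \<Phi> p + (1/\<epsilon>) * ((\<Phi> p)\<^sup>2 - 1) * \<Phi> p"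
  defines "Gj \<equiv> \<lambda>p. - Lap Fj p + (1/\<epsilon>\<^sup>2) * (3 * (\<Phi> p)\<^sup>2 - 1) * Fj p"
  defines "Bi \<equiv> \<lambda>p. \<epsilon>/2 * (\<Sum>i\<in>UNIV. (Dv (ei i) \<Phi> p)\<^sup>2) + 1/(4*\<epsilon>) * ((\<Phi> p)\<^sup>2 - 1)\<^sup>2"
  defines "W \<equiv> \<lambda>p. k * Gj p + M1 * (integral Qcube (\<lambda>x. \<Phi> (t, x)) - \<alpha>)
                 + M2 * (integral Qcube (\<lambda>x. Bi (t, x)) - \<beta>) * Fj p"
  assumes NS: "\<And>x j. Dv et (U j) (t, x) + (\<Sum>i\<in>UNIV. U i (t, x) * Dv (ei i) (U j) (t, x)) + Dv (ei j) Pp (t, x)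
                 = \<mu> * Lap (U j) (t, x) + W (t, x) * Dv (ei j) \<Phi> (t, x)"
    and dv: "\<And>x. (\<Sum>i\<in>UNIV. Dv (ei i) (U i) (t, x)) = 0"
    and PF: "\<And>x. Dv et \<Phi> (t, x) + (\<Sum>i\<in>UNIV. U i (t, x) * Dv (ei i) \<Phi> (t, x)) = - \<gamma> * W (t, x)"
  shows "((\<lambda>s. 1/2 * integral Qcube (\<lambda>x. \<Sum>j\<in>UNIV. (U j (s, x))\<^sup>2)
             + (k/(2*\<epsilon>) * integral Qcube (\<lambda>x. (Fj (s, x))\<^sup>2)
                + 1/2 * M1 * (integral Qcube (\<lambda>x. \<Phi> (s, x)) - \<alpha>)\<^sup>2
                + 1/2 * M2 * (integral Qcube (\<lambda>x. Bi (s, x)) - \<beta>)\<^sup>2))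
         has_real_derivative
           - (\<mu> * integral Qcube (\<lambda>x. \<Sum>j\<in>UNIV. \<Sum>i\<in>UNIV. (Dv (ei i) (U j) (t, x))\<^sup>2)
              + \<gamma> * integral Qcube (\<lambda>x. (W (t, x))\<^sup>2))) (at t)"
proof -
  note ms = mem_simps[OF gd]
  note Dvs = Dvs[OF gd]
  have memU[simp]: "U j \<in> Alg A" for j using mem by auto
  have memP[simp]: "\<Phi> \<in> Alg A" "Pp \<in> Alg A" using mem by auto
  have tS[simp]: "(t, x) \<in> SS" for x using t by simp
  have memF[simp]: "Fj \<in> Alg A" unfolding Fj_def by (intro ms mem)
  have memG[simp]: "Gj \<in> Alg A" unfolding Gj_def by (intro ms mem memF)
  have memB[simp]: "Bi \<in> Alg A" unfolding Bi_def by (intro ms mem memF)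
  have memW[simp]: "W \<in> Alg A" unfolding W_def by (intro ms mem memF memG)
  define NU where "NU = (\<lambda>p. \<Sum>j\<in>UNIV. (U j p)\<^sup>2)"
  have memNU[simp]: "NU \<in> Alg A" unfolding NU_def by (intro ms mem memF)
  define Fsq where "Fsq = (\<lambda>p. (Fj p)\<^sup>2)"
  have memFsq[simp]: "Fsq \<in> Alg A" unfolding Fsq_def by (intro ms mem memF)
  define IP where "IP = integral Qcube (\<lambda>x. \<Phi> (t, x))"
  define IB where "IB = integral Qcube (\<lambda>x. Bi (t, x))"
  define c1 where "c1 = M1 * (IP - \<alpha>)"
  define c2 where "c2 = M2 * (IB - \<beta>)"
  have Wt: "W p = k * Gj p + c1 + c2 * Fj p" for p unfolding W_def c1_def c2_def IP_def IB_def by simp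
  let ?I = "\<lambda>g. integral Qcube (\<lambda>x. Dv et g (t, x))"
  have D: "((\<lambda>s. 1/2 * integral Qcube (\<lambda>x. NU (s, x))
             + (k/(2*\<epsilon>) * integral Qcube (\<lambda>x. Fsq (s, x))
                + 1/2 * M1 * (integral Qcube (\<lambda>x. \<Phi> (s, x)) - \<alpha>)\<^sup>2
                + 1/2 * M2 * (integral Qcube (\<lambda>x. Bi (s, x)) - \<beta>)\<^sup>2))
         has_real_derivative
           (1/2 * ?I NU + (k/(2*\<epsilon>) * ?I Fsq + c1 * ?I \<Phi> + c2 * ?I Bi))) (at t)"
  proof -
    have sq: "((\<lambda>s. (f s - a)\<^sup>2) has_real_derivative 2 * (f t - a) * X) (at t)"
      if "(f has_real_derivative X) (at t)" for f :: "real \<Rightarrow> real" and X a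
      using that by (auto intro!: derivative_eq_intros)
    have "((\<lambda>s. 1/2 * integral Qcube (\<lambda>x. NU (s, x))
             + (k/(2*\<epsilon>) * integral Qcube (\<lambda>x. Fsq (s, x))
                + 1/2 * M1 * (integral Qcube (\<lambda>x. \<Phi> (s, x)) - \<alpha>)\<^sup>2
                + 1/2 * M2 * (integral Qcube (\<lambda>x. Bi (s, x)) - \<beta>)\<^sup>2))
         has_real_derivative
           (1/2 * ?I NU + (k/(2*\<epsilon>) * ?I Fsq + 1/2 * M1 * (2 * (IP - \<alpha>) * ?I \<Phi>)
              + 1/2 * M2 * (2 * (IB - \<beta>) * ?I Bi)))) (at t)"
      unfolding IP_def IB_def
      by (intro DERIV_add DERIV_cmult sq int_deriv[OF gd _ t] memNU memFsq memP memB)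
    then show ?thesis by (rule DERIV_cong) (simp add: c1_def c2_def algebra_simps)
  qed
  define R where "R x = 1/2 * Dv et NU (t, x) + (k/(2*\<epsilon>) * Dv et Fsq (t, x) + c1 * Dv et \<Phi> (t, x) + c2 * Dv et Bi (t, x))" for x
  have hI: "((\<lambda>x. g (t, x)) has_integral integral Qcube (\<lambda>x. g (t, x))) Qcube" if "g \<in> Alg A" for g
    using int_sl[OF gd that t] by (rule integrable_integral)
  have IR: "integral Qcube R = 1/2 * ?I NU + (k/(2*\<epsilon>) * ?I Fsq + c1 * ?I \<Phi> + c2 * ?I Bi)"
    unfolding R_def
    by (intro integral_unique has_integral_add has_integral_mult_right hI ms mem memNU memFsq memB)
  have epsn: "\<epsilon> \<noteq> 0" using eps by simp
  have sw: "Dv et (Dv (ei i) \<Phi>) (t, x) = Dv (ei i) (Dv et \<Phi>) (t, x)" for i x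
    using schwarz[OF gd memP(1) tS] by simp
  have DLap: "Dv et (Lap \<Phi>) (t, x) = Lap (Dv et \<Phi>) (t, x)" for x
    using Dv_Lap[OF gd memP(1) tS] by simp
  have eNU: "Dv et NU (t, x) = (\<Sum>j\<in>UNIV. 2 * U j (t, x) * Dv et (U j) (t, x))" for x
    unfolding NU_def by (simp only: Dvs Dv_const[OF gd] ms memU tS)
  have eFt: "Dv et Fj (t, x) = - \<epsilon> * Lap (Dv et \<Phi>) (t, x) + (1/\<epsilon>) * (3 * (\<Phi> (t, x))\<^sup>2 - 1) * Dv et \<Phi> (t, x)" for x
    unfolding Fj_def
    apply (simp only: Dvs Dv_const[OF gd] ms memP tS)
    by (simp add: DLap algebra_simps power2_eq_square)
  have eF: "Dv et Fsq (t, x) = 2 * Fj (t, x) * Dv et Fj (t, x)" for x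
    unfolding Fsq_def by (simp only: Dvs Dv_const[OF gd] ms memF tS)
  have eB: "Dv et Bi (t, x) = \<epsilon> * (\<Sum>i\<in>UNIV. Dv (ei i) \<Phi> (t, x) * Dv (ei i) (Dv et \<Phi>) (t, x))
      + (1/\<epsilon>) * ((\<Phi> (t, x))\<^sup>2 - 1) * \<Phi> (t, x) * Dv et \<Phi> (t, x)" for x
  proof -
    have "Dv et Bi (t, x) = \<epsilon>/2 * (\<Sum>i\<in>UNIV. 2 * Dv (ei i) \<Phi> (t, x) * Dv et (Dv (ei i) \<Phi>) (t, x))
      + 1/(4*\<epsilon>) * (2 * ((\<Phi> (t, x))\<^sup>2 - 1) * (2 * \<Phi> (t, x) * Dv et \<Phi> (t, x) - 0))"
      unfolding Bi_def by (simp only: Dvs Dv_const[OF gd] ms memP tS)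
    then show ?thesis using epsn by (simp add: sw sum_3 field_simps)
  qed
  define D1 where "D1 x = (\<Sum>i\<in>UNIV. Dv (ei i) (\<lambda>p. U i p * NU p) (t, x))" for x
  define D2 where "D2 x = (\<Sum>i\<in>UNIV. Dv (ei i) (\<lambda>p. U i p * Pp p) (t, x))" for x
  define D3 where "D3 x = (\<Sum>i\<in>UNIV. Dv (ei i) (\<lambda>p. \<Sum>j\<in>UNIV. U j p * Dv (ei i) (U j) p) (t, x))" for x
  define D4 where "D4 x = (\<Sum>i\<in>UNIV. Dv (ei i) (\<lambda>p. Fj p * Dv (ei i) (Dv et \<Phi>) p - Dv et \<Phi> p * Dv (ei i) Fj p) (t, x))" for x
  define D5 where "D5 x = (\<Sum>i\<in>UNIV. Dv (ei i) (\<lambda>p. Dv et \<Phi> p * Dv (ei i) \<Phi> p) (t, x))" for x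
  have e1: "D1 x = (\<Sum>i\<in>UNIV. U i (t, x) * (\<Sum>j\<in>UNIV. 2 * U j (t, x) * Dv (ei i) (U j) (t, x)))" for x
  proof -
    have "D1 x = (\<Sum>i\<in>UNIV. U i (t, x) * (\<Sum>j\<in>UNIV. 2 * U j (t, x) * Dv (ei i) (U j) (t, x)) + Dv (ei i) (U i) (t, x) * NU (t, x))"
      unfolding D1_def NU_def by (simp only: Dvs Dv_const[OF gd] ms memU tS)
    also have "\<dots> = (\<Sum>i\<in>UNIV. U i (t, x) * (\<Sum>j\<in>UNIV. 2 * U j (t, x) * Dv (ei i) (U j) (t, x))) + (\<Sum>i\<in>UNIV. Dv (ei i) (U i) (t, x)) * NU (t, x)"
      by (simp add: sum.distrib sum_distrib_right)
    finally show ?thesis using dv by simp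
  qed
  have e2: "D2 x = (\<Sum>i\<in>UNIV. U i (t, x) * Dv (ei i) Pp (t, x))" for x
  proof -
    have "D2 x = (\<Sum>i\<in>UNIV. U i (t, x) * Dv (ei i) Pp (t, x) + Dv (ei i) (U i) (t, x) * Pp (t, x))"
      unfolding D2_def by (simp only: Dvs Dv_const[OF gd] ms memU memP tS)
    also have "\<dots> = (\<Sum>i\<in>UNIV. U i (t, x) * Dv (ei i) Pp (t, x)) + (\<Sum>i\<in>UNIV. Dv (ei i) (U i) (t, x)) * Pp (t, x)"
      by (simp add: sum.distrib sum_distrib_right)
    finally show ?thesis using dv by simp
  qed
  have e3: "D3 x = (\<Sum>j\<in>UNIV. \<Sum>i\<in>UNIV. (Dv (ei i) (U j) (t, x))\<^sup>2) + (\<Sum>j\<in>UNIV. U j (t, x) * Lap (U j) (t, x))" for x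
  proof -
    have "D3 x = (\<Sum>i\<in>UNIV. \<Sum>j\<in>UNIV. U j (t, x) * Dv (ei i) (Dv (ei i) (U j)) (t, x) + Dv (ei i) (U j) (t, x) * Dv (ei i) (U j) (t, x))"
      unfolding D3_def by (simp only: Dvs Dv_const[OF gd] ms memU tS)
    then show ?thesis unfolding Lap_def by (simp add: sum_3 power2_eq_square algebra_simps)
  qed
  have e4: "D4 x = Fj (t, x) * Lap (Dv et \<Phi>) (t, x) - Dv et \<Phi> (t, x) * Lap Fj (t, x)" for x
  proof -
    have "D4 x = (\<Sum>i\<in>UNIV. (Fj (t, x) * Dv (ei i) (Dv (ei i) (Dv et \<Phi>)) (t, x) + Dv (ei i) Fj (t, x) * Dv (ei i) (Dv et \<Phi>) (t, x))
        - (Dv et \<Phi> (t, x) * Dv (ei i) (Dv (ei i) Fj) (t, x) + Dv (ei i) (Dv et \<Phi>) (t, x) * Dv (ei i) Fj (t, x)))"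
      unfolding D4_def by (simp only: Dvs Dv_const[OF gd] ms memF memP tS)
    then show ?thesis unfolding Lap_def by (simp add: sum_3 algebra_simps)
  qed
  have e5: "D5 x = (\<Sum>i\<in>UNIV. Dv (ei i) \<Phi> (t, x) * Dv (ei i) (Dv et \<Phi>) (t, x)) + Dv et \<Phi> (t, x) * Lap \<Phi> (t, x)" for x
  proof -
    have "D5 x = (\<Sum>i\<in>UNIV. Dv et \<Phi> (t, x) * Dv (ei i) (Dv (ei i) \<Phi>) (t, x) + Dv (ei i) (Dv et \<Phi>) (t, x) * Dv (ei i) \<Phi> (t, x))"
      unfolding D5_def by (simp only: Dvs Dv_const[OF gd] ms memP tS)
    then show ?thesis unfolding Lap_def by (simp add: sum_3 algebra_simps)
  qed
  have NS': "Dv et (U j) (t, x) = \<mu> * Lap (U j) (t, x) + W (t, x) * Dv (ei j) \<Phi> (t, x)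
      - (\<Sum>i\<in>UNIV. U i (t, x) * Dv (ei i) (U j) (t, x)) - Dv (ei j) Pp (t, x)" for j x
    using NS[of j x] by linarith
  have PF': "Dv et \<Phi> (t, x) = - \<gamma> * W (t, x) - (\<Sum>i\<in>UNIV. U i (t, x) * Dv (ei i) \<Phi> (t, x))" for x
    using PF[of x] by linarith
  have FjE: "Fj (t, x) = - \<epsilon> * Lap \<Phi> (t, x) + 1/\<epsilon> * ((\<Phi> (t, x))\<^sup>2 - 1) * \<Phi> (t, x)" for x
    by (simp add: Fj_def)
  have GjE: "Gj (t, x) = - Lap Fj (t, x) + 1/\<epsilon>\<^sup>2 * (3 * (\<Phi> (t, x))\<^sup>2 - 1) * Fj (t, x)" for x
    by (simp add: Gj_def)
  have main: "R x = - (\<mu> * (\<Sum>j\<in>UNIV. \<Sum>i\<in>UNIV. (Dv (ei i) (U j) (t, x))\<^sup>2) + \<gamma> * (W (t, x))\<^sup>2)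
      - 1/2 * D1 x - D2 x + \<mu> * D3 x - k * D4 x + c2 * \<epsilon> * D5 x" for x
    unfolding R_def eNU eF eFt eB e1 e2 e3 e4 e5
    apply (simp only: NS' PF')
    apply (simp only: Wt GjE FjE)
    using epsn by (simp add: sum_3 field_simps power2_eq_square)
  have Z: "((\<lambda>x. \<Sum>i\<in>UNIV. Dv (ei i) (H i) (t, x)) has_integral 0) Qcube"
    if HA: "\<And>i. H i \<in> Alg A" and HP: "\<And>i. Per (H i)" for H
  proof -
    have "(\<lambda>x. \<Sum>i\<in>UNIV. Dv (ei i) (H i) (t, x)) integrable_on Qcube"
    proof (rule intQ, rule continuous_on_sum)
      fix i show "continuous_on UNIV (\<lambda>x. Dv (ei i) (H i) (t, x))"
        by (rule cont_alg[OF gd Dv_alg[OF gd HA] t])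
    qed
    then have "((\<lambda>x. \<Sum>i\<in>UNIV. Dv (ei i) (H i) (t, x)) has_integral integral Qcube (\<lambda>x. \<Sum>i\<in>UNIV. Dv (ei i) (H i) (t, x))) Qcube"
      by (rule integrable_integral)
    then show ?thesis unfolding ibp_sum[OF gd HA HP t] .
  qed
  have PU: "Per (U j)" for j using per by auto
  have Ppow: "Per (\<lambda>p. (g p)\<^sup>2)" if "Per g" for g using that by (simp add: Per_def)
  have PN: "Per NU" unfolding NU_def by (intro Per_sum Ppow PU)
  have Z1: "(D1 has_integral 0) Qcube" unfolding D1_def
    by (rule Z) (intro ms memNU memU, intro Per_mult PN PU)
  have Z2: "(D2 has_integral 0) Qcube" unfolding D2_def
    by (rule Z) (intro ms memP memU, intro Per_mult PU per)
  have Z3: "(D3 has_integral 0) Qcube" unfolding D3_def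
    by (rule Z) (intro ms memU, intro Per_sum Per_mult PU Per_Dv[OF gd] memU)
  have PF0: "Per Fj" unfolding Fj_def Lap_def
    by (intro Per_add Per_mult Per_diff Per_sum Per_const Ppow Per_Dv[OF gd] per ms memP)
  have Z4: "(D4 has_integral 0) Qcube" unfolding D4_def
    by (rule Z) (intro ms memF memP, intro Per_diff Per_mult PF0 Per_Dv[OF gd] per ms memP memF)
  have Z5: "(D5 has_integral 0) Qcube" unfolding D5_def
    by (rule Z) (intro ms memP, intro Per_mult Per_Dv[OF gd] per ms memP)
  have hGU: "((\<lambda>x. \<Sum>j\<in>UNIV. \<Sum>i\<in>UNIV. (Dv (ei i) (U j) (t, x))\<^sup>2) has_integral
      integral Qcube (\<lambda>x. \<Sum>j\<in>UNIV. \<Sum>i\<in>UNIV. (Dv (ei i) (U j) (t, x))\<^sup>2)) Qcube"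
    using hI[of "\<lambda>p. \<Sum>j\<in>UNIV. \<Sum>i\<in>UNIV. (Dv (ei i) (U j) p)\<^sup>2"] by (simp add: ms)
  have hW: "((\<lambda>x. (W (t, x))\<^sup>2) has_integral integral Qcube (\<lambda>x. (W (t, x))\<^sup>2)) Qcube"
    using hI[of "\<lambda>p. (W p)\<^sup>2"] by (simp add: ms)
  have Rint: "(R has_integral - (\<mu> * integral Qcube (\<lambda>x. \<Sum>j\<in>UNIV. \<Sum>i\<in>UNIV. (Dv (ei i) (U j) (t, x))\<^sup>2)
              + \<gamma> * integral Qcube (\<lambda>x. (W (t, x))\<^sup>2))) Qcube"
  proof -
    have "((\<lambda>x. - (\<mu> * (\<Sum>j\<in>UNIV. \<Sum>i\<in>UNIV. (Dv (ei i) (U j) (t, x))\<^sup>2) + \<gamma> * (W (t, x))\<^sup>2)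
      - 1/2 * D1 x - D2 x + \<mu> * D3 x - k * D4 x + c2 * \<epsilon> * D5 x) has_integral
      (- (\<mu> * integral Qcube (\<lambda>x. \<Sum>j\<in>UNIV. \<Sum>i\<in>UNIV. (Dv (ei i) (U j) (t, x))\<^sup>2)
              + \<gamma> * integral Qcube (\<lambda>x. (W (t, x))\<^sup>2)) - 1/2 * 0 - 0 + \<mu> * 0 - k * 0 + c2 * \<epsilon> * 0)) Qcube"
      by (intro has_integral_add has_integral_diff has_integral_neg has_integral_mult_right hGU hW Z1 Z2 Z3 Z4 Z5)
    moreover have "R = (\<lambda>x. - (\<mu> * (\<Sum>j\<in>UNIV. \<Sum>i\<in>UNIV. (Dv (ei i) (U j) (t, x))\<^sup>2) + \<gamma> * (W (t, x))\<^sup>2)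
      - 1/2 * D1 x - D2 x + \<mu> * D3 x - k * D4 x + c2 * \<epsilon> * D5 x)"
      by (rule ext) (rule main)
    ultimately show ?thesis by simp
  qed
  have "1/2 * ?I NU + (k/(2*\<epsilon>) * ?I Fsq + c1 * ?I \<Phi> + c2 * ?I Bi) =
      - (\<mu> * integral Qcube (\<lambda>x. \<Sum>j\<in>UNIV. \<Sum>i\<in>UNIV. (Dv (ei i) (U j) (t, x))\<^sup>2)
              + \<gamma> * integral Qcube (\<lambda>x. (W (t, x))\<^sup>2))"
    unfolding IR[symmetric] by (rule integral_unique[OF Rint])
  from DERIV_cong[OF D this] show ?thesis by (simp add: NU_def Fsq_def)
qed


end

lemma norm_sq_vec: "(norm (v::real^'n))\<^sup>2 = (\<Sum>j\<in>UNIV. (v $ j)\<^sup>2)"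
  by (simp add: norm_vec_def L2_set_def sum_nonneg)

lemma inner_vec_real: "(v::real^'n) \<bullet> w = (\<Sum>j\<in>UNIV. v $ j * w $ j)"
  by (simp add: inner_vec_def)

theorem lemma2p3:
  fixes k \<epsilon> \<gamma> \<mu> M1 M2 :: real
    and u :: "real \<Rightarrow> sp \<Rightarrow> real ^ 3" and P :: "real \<Rightarrow> sp \<Rightarrow> real"
    and \<phi> :: "real \<Rightarrow> sp \<Rightarrow> real"
    and u0 :: "sp \<Rightarrow> real ^ 3" and \<phi>0 :: "sp \<Rightarrow> real"
  assumes pos: "k > 0" "\<epsilon> > 0" "\<gamma> > 0" "\<mu> > 0" "M1 > 0" "M2 > 0"
    and u0: "smooth_on UNIV u0" "periodic u0" "\<forall>x. divg u0 x = 0" "integral Qcube u0 = 0"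
    and \<phi>0: "smooth_on UNIV \<phi>0" "periodic \<phi>0"
    and sm_u: "smooth_on ({0<..} \<times> UNIV) (\<lambda>(t, x). u t x)"
    and sm_P: "smooth_on ({0<..} \<times> UNIV) (\<lambda>(t, x). P t x)"
    and sm_\<phi>: "smooth_on ({0<..} \<times> UNIV) (\<lambda>(t, x). \<phi> t x)"
    and cont_u: "continuous_on ({0..} \<times> UNIV) (\<lambda>(t, x). u t x)"
    and cont_\<phi>: "continuous_on ({0..} \<times> UNIV) (\<lambda>(t, x). \<phi> t x)"
    and per: "\<forall>t\<ge>0. periodic (u t) \<and> periodic (P t) \<and> periodic (\<phi> t)"
    and init: "u 0 = u0" "\<phi> 0 = \<phi>0"
    and NS: "\<forall>t>0. \<forall>x. vector_derivative (\<lambda>s. u s x) (at t) + advect (u t) (u t) x + grad (P t) x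
               = \<mu> *\<^sub>R vlapl (u t) x
                 + dEop k \<epsilon> M1 M2 (Aop \<phi>0) (Bop \<epsilon> \<phi>0) (\<phi> t) x *\<^sub>R grad (\<phi> t) x"
    and incompr: "\<forall>t>0. \<forall>x. divg (u t) x = 0"
    and PF: "\<forall>t>0. \<forall>x. deriv (\<lambda>s. \<phi> s x) t + u t x \<bullet> grad (\<phi> t) x
               = - \<gamma> * dEop k \<epsilon> M1 M2 (Aop \<phi>0) (Bop \<epsilon> \<phi>0) (\<phi> t) x"
  shows "\<forall>t>0. ((\<lambda>s. 1/2 * L2sqv (u s) + Eop k \<epsilon> M1 M2 (Aop \<phi>0) (Bop \<epsilon> \<phi>0) (\<phi> s))
            has_real_derivative
              - (\<mu> * gradL2sqv (u t) + \<gamma> * L2sq (dEop k \<epsilon> M1 M2 (Aop \<phi>0) (Bop \<epsilon> \<phi>0) (\<phi> t)))) (at t)"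
proof -
  define \<Phi>f where "\<Phi>f = (\<lambda>(t, x). \<phi> t x)"
  define Uf where "Uf = (\<lambda>(t, x). u t x)"
  define Pf where "Pf = (\<lambda>(t, x). P t x)"
  define U where "U = (\<lambda>j p. Uf p $ j)"
  have SSeq: "{0<..} \<times> UNIV = SS" by (simp add: SS_def)
  from sm_\<phi> obtain F\<Phi> where F\<Phi>: "\<Phi>f \<in> F\<Phi>"
    "\<forall>g\<in>F\<Phi>. continuous_on SS g \<and> (\<forall>x\<in>SS. g differentiable (at x)) \<and> (\<forall>v. (\<lambda>x. frechet_derivative g (at x) v) \<in> F\<Phi>)"
    unfolding smooth_on_def \<Phi>f_def SSeq by blast
  from sm_P obtain FP where FP: "Pf \<in> FP"
    "\<forall>g\<in>FP. continuous_on SS g \<and> (\<forall>x\<in>SS. g differentiable (at x)) \<and> (\<forall>v. (\<lambda>x. frechet_derivative g (at x) v) \<in> FP)"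
    unfolding smooth_on_def Pf_def SSeq by blast
  from sm_u obtain Fu where Fu: "Uf \<in> Fu"
    "\<forall>g\<in>Fu. continuous_on SS g \<and> (\<forall>x\<in>SS. g differentiable (at x)) \<and> (\<forall>v. (\<lambda>x. frechet_derivative g (at x) v) \<in> Fu)"
    unfolding smooth_on_def Uf_def SSeq by blast
  define A where "A = F\<Phi> \<union> FP \<union> {h. \<exists>g\<in>Fu. \<exists>j. h = (\<lambda>p. g p $ j)}"
  have comp_hd: "((\<lambda>p. g p $ j) has_derivative (\<lambda>v. frechet_derivative g (at p) v $ j)) (at p)"
    if "g \<in> Fu" "p \<in> SS" for g j p
  proof -
    have "(g has_derivative frechet_derivative g (at p)) (at p)"
      using Fu(2) that frechet_derivative_works by blast
    then show ?thesis by (rule bounded_linear.has_derivative[OF bounded_linear_vec_nth])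
  qed
  have gd: "good A"
    unfolding good_def
  proof
    fix g assume "g \<in> A"
    then consider (a) "g \<in> F\<Phi> \<union> FP" | (b) g' j where "g' \<in> Fu" "g = (\<lambda>p. g' p $ j)"
      unfolding A_def by blast
    then show "(\<forall>p\<in>SS. g differentiable (at p)) \<and> (\<forall>v. Dv v g \<in> Alg A)"
    proof cases
      case a
      have d: "\<forall>p\<in>SS. g differentiable (at p)" using a F\<Phi>(2) FP(2) by blast
      have "Dv v g \<in> Alg A" for v
      proof -
        have "(\<lambda>x. frechet_derivative g (at x) v) \<in> A" using a F\<Phi>(2) FP(2) unfolding A_def by blast
        moreover have "Dv v g = (\<lambda>x. frechet_derivative g (at x) v)" by (simp add: Dv_def fun_eq_iff)
        ultimately show ?thesis by (simp add: Alg.base)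
      qed
      then show ?thesis using d by blast
    next
      case b
      have d: "\<forall>p\<in>SS. g differentiable (at p)"
        using comp_hd[OF b(1)] b(2) unfolding differentiable_def by blast
      have "Dv v g \<in> Alg A" for v
      proof (rule Alg.agree[of "\<lambda>p. (\<lambda>x. frechet_derivative g' (at x) v) p $ j"])
        have "(\<lambda>x. frechet_derivative g' (at x) v) \<in> Fu" using Fu(2) b(1) by blast
        then have "\<exists>g\<in>Fu. \<exists>j'. (\<lambda>p. (\<lambda>x. frechet_derivative g' (at x) v) p $ j) = (\<lambda>p. g p $ j')"
          by (intro bexI[of _ "\<lambda>x. frechet_derivative g' (at x) v"] exI[of _ j]) auto
        then show "(\<lambda>p. (\<lambda>x. frechet_derivative g' (at x) v) p $ j) \<in> Alg A"
          unfolding A_def by (intro Alg.base UnI2 CollectI)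
        show "\<forall>p\<in>SS. Dv v g p = (\<lambda>x. frechet_derivative g' (at x) v) p $ j"
          using Dv_at[OF comp_hd[OF b(1)]] b(2) by simp
      qed
      then show ?thesis using d by blast
    qed
  qed
  have m\<Phi>: "\<Phi>f \<in> Alg A" unfolding A_def using F\<Phi>(1) by (intro Alg.base) blast
  have mP: "Pf \<in> Alg A" unfolding A_def using FP(1) by (intro Alg.base) blast
  have mU: "U j \<in> Alg A" for j
  proof -
    have "\<exists>g\<in>Fu. \<exists>j'. U j = (\<lambda>p. g p $ j')" unfolding U_def using Fu(1) by blast
    then show ?thesis unfolding A_def by (intro Alg.base UnI2 CollectI)
  qed
  have p\<Phi>: "Per \<Phi>f" using per unfolding Per_def periodic_def \<Phi>f_def by auto
  have pP: "Per Pf" using per unfolding Per_def periodic_def Pf_def by auto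
  have pU: "Per (U j)" for j using per unfolding Per_def periodic_def U_def Uf_def by auto
  have sl\<Phi>: "sl \<Phi>f s = \<phi> s" for s by (simp add: sl_def \<Phi>f_def fun_eq_iff)
  have slP: "sl Pf s = P s" for s by (simp add: sl_def Pf_def fun_eq_iff)
  have slU: "sl (U j) s = (\<lambda>y. u s y $ j)" for j s by (simp add: sl_def U_def Uf_def fun_eq_iff)
  have Uval: "U j (s, x) = u s x $ j" for j s x by (simp add: U_def Uf_def)
  have \<Phi>val: "\<Phi>f (s, x) = \<phi> s x" for s x by (simp add: \<Phi>f_def)
  let ?\<alpha> = "Aop \<phi>0" and ?\<beta> = "Bop \<epsilon> \<phi>0"
  define Fj where "Fj \<equiv> \<lambda>p. - \<epsilon> * Lap \<Phi>f p + (1/\<epsilon>) * ((\<Phi>f p)\<^sup>2 - 1) * \<Phi>f p"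
  define Gj where "Gj \<equiv> \<lambda>p. - Lap Fj p + (1/\<epsilon>\<^sup>2) * (3 * (\<Phi>f p)\<^sup>2 - 1) * Fj p"
  define Bi where "Bi \<equiv> \<lambda>p. \<epsilon>/2 * (\<Sum>i\<in>UNIV. (Dv (ei i) \<Phi>f p)\<^sup>2) + 1/(4*\<epsilon>) * ((\<Phi>f p)\<^sup>2 - 1)\<^sup>2"
  have mF: "Fj \<in> Alg A" unfolding Fj_def by (intro mem_simps[OF gd] m\<Phi>)
  have lapl\<phi>: "lapl (\<phi> s) x = Lap \<Phi>f (s, x)" if "s > 0" for s x
    using lapl_sl[OF gd m\<Phi> that] unfolding sl\<Phi> .
  have fopE: "fop \<epsilon> (\<phi> s) = sl Fj s" if "s > 0" for s
    using that by (simp add: fun_eq_iff fop_def sl_def Fj_def lapl\<phi> \<Phi>val)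
  have gopE: "gop \<epsilon> (\<phi> s) x = Gj (s, x)" if "s > 0" for s x
    using that lapl_sl[OF gd mF that, of x] by (simp add: gop_def fopE Gj_def sl_def \<Phi>val)
  have AopE: "Aop (\<phi> s) = integral Qcube (\<lambda>x. \<Phi>f (s, x))" for s
    by (simp add: Aop_def \<Phi>val)
  have BopE: "Bop \<epsilon> (\<phi> s) = integral Qcube (\<lambda>x. Bi (s, x))" if "s > 0" for s
  proof -
    have "(norm (grad (\<phi> s) x))\<^sup>2 = (\<Sum>i\<in>UNIV. (Dv (ei i) \<Phi>f (s, x))\<^sup>2)" for x
      using grad_sl[OF gd m\<Phi> that, of x] unfolding sl\<Phi> by (simp add: norm_sq_vec)
    then show ?thesis by (simp add: Bop_def Bi_def \<Phi>val)
  qed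
  have EopE: "1/2 * L2sqv (u s) + Eop k \<epsilon> M1 M2 ?\<alpha> ?\<beta> (\<phi> s)
     = 1/2 * integral Qcube (\<lambda>x. \<Sum>j\<in>UNIV. (U j (s, x))\<^sup>2)
             + (k/(2*\<epsilon>) * integral Qcube (\<lambda>x. (Fj (s, x))\<^sup>2)
                + 1/2 * M1 * (integral Qcube (\<lambda>x. \<Phi>f (s, x)) - ?\<alpha>)\<^sup>2
                + 1/2 * M2 * (integral Qcube (\<lambda>x. Bi (s, x)) - ?\<beta>)\<^sup>2)" if "s > 0" for s
    using that by (simp add: L2sqv_def Eop_def norm_sq_vec Uval fopE sl_def AopE BopE)
  show ?thesis
  proof (intro allI impI)
    fix t :: real assume t: "t > 0"
    define W where "W \<equiv> \<lambda>p. k * Gj p + M1 * (integral Qcube (\<lambda>x. \<Phi>f (t, x)) - ?\<alpha>)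
                 + M2 * (integral Qcube (\<lambda>x. Bi (t, x)) - ?\<beta>) * Fj p"
    have dE: "dEop k \<epsilon> M1 M2 ?\<alpha> ?\<beta> (\<phi> t) x = W (t, x)" for x
      using t by (simp add: dEop_def W_def gopE AopE BopE fopE sl_def)
    have tS: "(t, x) \<in> SS" for x using t by simp
    have NSg: "Dv et (U j) (t, x) + (\<Sum>i\<in>UNIV. U i (t, x) * Dv (ei i) (U j) (t, x)) + Dv (ei j) Pf (t, x)
                 = \<mu> * Lap (U j) (t, x) + W (t, x) * Dv (ei j) \<Phi>f (t, x)" for x j
    proof -
      have hd: "(Uf has_derivative frechet_derivative Uf (at (t, x))) (at (t, x))"
        using Fu(1,2) tS frechet_derivative_works by blast
      let ?D = "frechet_derivative Uf (at (t, x))"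
      have lin: "?D (h, 0) = h *\<^sub>R ?D (1, 0)" for h
        using linear_scale[OF has_derivative_linear[OF hd], of h "(1, 0)"] by simp
      have "((\<lambda>s. u s x) has_derivative (\<lambda>h. ?D (h, 0))) (at t)"
      proof -
        have "((\<lambda>s. (s, x)) has_derivative (\<lambda>h. (h, 0))) (at t)" by (auto intro!: derivative_eq_intros)
        from has_derivative_compose[OF this hd] show ?thesis by (simp add: o_def Uf_def)
      qed
      then have "((\<lambda>s. u s x) has_derivative (\<lambda>h. h *\<^sub>R ?D (1, 0))) (at t)"
        by (rule has_derivative_eq_rhs) (rule ext, rule lin)
      then have "((\<lambda>s. u s x) has_vector_derivative ?D (1, 0)) (at t)"
        unfolding has_vector_derivative_def .
      then have vd: "vector_derivative (\<lambda>s. u s x) (at t) = ?D (1, 0)" by (rule vector_derivative_at)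
      have Dt: "Dv et (U j) (t, x) = ?D (1, 0) $ j"
        using Dv_at[OF comp_hd[OF Fu(1) tS]] by (simp add: U_def et_def)
      have adv: "advect (u t) (u t) x $ j = (\<Sum>i\<in>UNIV. U i (t, x) * Dv (ei i) (U j) (t, x))"
        using pd_sl'[OF gd mU t] by (simp add: advect_def Uval slU[symmetric])
      have gP: "grad (P t) x $ j = Dv (ei j) Pf (t, x)"
        using pd_sl'[OF gd mP t] by (simp add: grad_def slP[symmetric])
      have vl: "vlapl (u t) x $ j = Lap (U j) (t, x)"
        using lapl_sl[OF gd mU t] by (simp add: vlapl_def slU[symmetric])
      have g\<phi>: "grad (\<phi> t) x $ j = Dv (ei j) \<Phi>f (t, x)"
        using pd_sl'[OF gd m\<Phi> t] by (simp add: grad_def sl\<Phi>[symmetric])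
      have "(vector_derivative (\<lambda>s. u s x) (at t) + advect (u t) (u t) x + grad (P t) x) $ j
          = (\<mu> *\<^sub>R vlapl (u t) x + dEop k \<epsilon> M1 M2 ?\<alpha> ?\<beta> (\<phi> t) x *\<^sub>R grad (\<phi> t) x) $ j"
      proof -
        have "vector_derivative (\<lambda>s. u s x) (at t) + advect (u t) (u t) x + grad (P t) x
          = \<mu> *\<^sub>R vlapl (u t) x + dEop k \<epsilon> M1 M2 ?\<alpha> ?\<beta> (\<phi> t) x *\<^sub>R grad (\<phi> t) x"
          using NS t by blast
        then show ?thesis by simp
      qed
      then show ?thesis by (simp add: vd Dt[symmetric] adv gP vl g\<phi> dE)
    qed
    have dvg: "(\<Sum>i\<in>UNIV. Dv (ei i) (U i) (t, x)) = 0" for x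
    proof -
      have "divg (u t) x = 0" using incompr t by blast
      then show ?thesis by (simp add: divg_def slU[symmetric] pd_sl'[OF gd mU t])
    qed
    have PFg: "Dv et \<Phi>f (t, x) + (\<Sum>i\<in>UNIV. U i (t, x) * Dv (ei i) \<Phi>f (t, x)) = - \<gamma> * W (t, x)" for x
    proof -
      have "deriv (\<lambda>s. \<phi> s x) t = Dv et \<Phi>f (t, x)"
        using DERIV_imp_deriv[OF deriv_sl[OF gd m\<Phi> t, of x]] by (simp add: \<Phi>val)
      moreover have "u t x \<bullet> grad (\<phi> t) x = (\<Sum>i\<in>UNIV. U i (t, x) * Dv (ei i) \<Phi>f (t, x))"
        using pd_sl'[OF gd m\<Phi> t] by (simp add: inner_vec_real grad_def Uval sl\<Phi>[symmetric])
      moreover have "deriv (\<lambda>s. \<phi> s x) t + u t x \<bullet> grad (\<phi> t) x = - \<gamma> * dEop k \<epsilon> M1 M2 ?\<alpha> ?\<beta> (\<phi> t) x"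
        using PF t by blast
      ultimately show ?thesis using dE[of x] by simp
    qed
    have G: "((\<lambda>s. 1/2 * integral Qcube (\<lambda>x. \<Sum>j\<in>UNIV. (U j (s, x))\<^sup>2)
             + (k/(2*\<epsilon>) * integral Qcube (\<lambda>x. (Fj (s, x))\<^sup>2)
                + 1/2 * M1 * (integral Qcube (\<lambda>x. \<Phi>f (s, x)) - ?\<alpha>)\<^sup>2
                + 1/2 * M2 * (integral Qcube (\<lambda>x. Bi (s, x)) - ?\<beta>)\<^sup>2))
         has_real_derivative
           - (\<mu> * integral Qcube (\<lambda>x. \<Sum>j\<in>UNIV. \<Sum>i\<in>UNIV. (Dv (ei i) (U j) (t, x))\<^sup>2)
              + \<gamma> * integral Qcube (\<lambda>x. (W (t, x))\<^sup>2))) (at t)"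
      unfolding W_def Gj_def Fj_def Bi_def
      by (rule energy_generic[OF gd m\<Phi> mP mU p\<Phi> pP pU t pos(2) NSg[unfolded W_def Gj_def Fj_def Bi_def]
            dvg PFg[unfolded W_def Gj_def Fj_def Bi_def]])
    have gU: "gradL2sqv (u t) = integral Qcube (\<lambda>x. \<Sum>j\<in>UNIV. \<Sum>i\<in>UNIV. (Dv (ei i) (U j) (t, x))\<^sup>2)"
      unfolding gradL2sqv_def using grad_sl[OF gd mU t] by (simp add: slU[symmetric] norm_sq_vec)
    have gW: "L2sq (dEop k \<epsilon> M1 M2 ?\<alpha> ?\<beta> (\<phi> t)) = integral Qcube (\<lambda>x. (W (t, x))\<^sup>2)"
      by (simp add: L2sq_def dE)
    show "((\<lambda>s. 1/2 * L2sqv (u s) + Eop k \<epsilon> M1 M2 ?\<alpha> ?\<beta> (\<phi> s))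
            has_real_derivative
              - (\<mu> * gradL2sqv (u t) + \<gamma> * L2sq (dEop k \<epsilon> M1 M2 ?\<alpha> ?\<beta> (\<phi> t)))) (at t)"
      unfolding gU gW
      by (rule has_field_derivative_transform_within_open[OF G open_greaterThan, of 0])
         (use t EopE in auto)
  qed
qed

end
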